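(* Let $\eta\in(0,1)$. With probability one, for every $j$ large enough and every $W\in\Sigma_{\lfloor\eta j\rfloor}$, one has $\#\mathcal S_j(\eta,W)\le j$.
   Context: Fix $d\ge1$. $\Sigma_j$ is the set of words of length $j$ over the alphabet $\{0,1\}^d$ and $\Sigma^*=\bigcup_{j\ge1}\Sigma_j$; for $w=w_1\cdots w_j\in\Sigma_j$ with $w_k=(w_k^{(1)},\dots,w_k^{(d)})$, $I_w=\prod_{i=1}^d[x_w^{(i)},x_w^{(i)}+2^{-j}]$ where $x_w^{(i)}=\sum_{k=1}^jw_k^{(i)}2^{-k}$. Let $(p_w)_{w\in\Sigma^*}$ be independent Bernoulli random variables with $\mathbb P(p_w=1)=2^{-d(1-\eta)|w|}$. Set $\mathcal S_j(\eta)=\{w\in\Sigma_j:p_w=1\}$ and, for $W\in\Sigma^*$, $\mathcal S_j(\eta,W)=\{w\in\mathcal S_j(\eta): I_w\subset I_W\}$. *)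

theory Defs
  imports "HOL-Probability.Probability"
begin

text \<open>A letter of the alphabet {0,1}^d is a list of length d with entries in {0,1};
  a word is a list of letters. Coordinates are indexed by i < d (0-based).\<close>

definition letters :: "nat \<Rightarrow> nat list set" where
  "letters d = {a. length a = d \<and> set a \<subseteq> {0,1}}"

definition Sigma_len :: "nat \<Rightarrow> nat \<Rightarrow> nat list list set" where
  "Sigma_len d j = {w. length w = j \<and> set w \<subseteq> letters d}"

definition Sigma_star :: "nat \<Rightarrow> nat list list set" where
  "Sigma_star d = (\<Union>j\<in>{1..}. Sigma_len d j)"

definition corner :: "nat list list \<Rightarrow> nat \<Rightarrow> real" where
  "corner w i = (\<Sum>k<length w. real ((w ! k) ! i) * 2 powr (- real (k + 1)))"

definition cube :: "nat \<Rightarrow> nat list list \<Rightarrow> (nat \<Rightarrow> real) set" where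
  "cube d w = {x. (\<forall>i<d. corner w i \<le> x i \<and> x i \<le> corner w i + 2 powr (- real (length w)))
                 \<and> (\<forall>i\<ge>d. x i = 0)}"

definition S_set :: "nat \<Rightarrow> (nat list list \<Rightarrow> 'a \<Rightarrow> bool) \<Rightarrow> 'a \<Rightarrow> nat \<Rightarrow> nat list list set" where
  "S_set d p \<omega> j = {w \<in> Sigma_len d j. p w \<omega>}"

definition S_set_in :: "nat \<Rightarrow> (nat list list \<Rightarrow> 'a \<Rightarrow> bool) \<Rightarrow> 'a \<Rightarrow> nat \<Rightarrow> nat list list \<Rightarrow> nat list list set" where
  "S_set_in d p \<omega> j W = {w \<in> S_set d p \<omega> j. cube d w \<subseteq> cube d W}"

end

theory Submission
  imports Defs
begin


fun cnt :: "nat list list \<Rightarrow> nat \<Rightarrow> nat" where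
  "cnt [] i = 0"
| "cnt (a # w) i = a ! i * 2 ^ length w + cnt w i"

lemma letters_eq: "letters d = {xs. set xs \<subseteq> {0,1} \<and> length xs = d}"
  unfolding letters_def by auto

lemma finite_letters: "finite (letters d)"
  unfolding letters_eq by (rule finite_lists_length_eq) auto

lemma card_letters: "card (letters d) = 2 ^ d"
  unfolding letters_eq by (subst card_lists_length_eq) (auto simp: numeral_2_eq_2)

lemma Sigma_eq: "Sigma_len d j = {xs. set xs \<subseteq> letters d \<and> length xs = j}"
  unfolding Sigma_len_def by auto

lemma finite_Sigma: "finite (Sigma_len d j)"
  unfolding Sigma_eq by (rule finite_lists_length_eq) (rule finite_letters)

lemma card_Sigma: "card (Sigma_len d j) = 2 ^ (d * j)"
  unfolding Sigma_eq by (subst card_lists_length_eq) (auto simp: finite_letters card_letters power_mult)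

lemma corner_Cons: "corner (a # w) i = real (a ! i) / 2 + corner w i / 2"
proof -
  have "corner (a # w) i = (\<Sum>k<Suc (length w). real ((a#w) ! k ! i) * 2 powr (- real (k + 1)))"
    unfolding corner_def by simp
  also have "\<dots> = real (a ! i) * 2 powr (-1) + (\<Sum>k<length w. real (w ! k ! i) * 2 powr (- real (k + 2)))"
    by (subst sum.lessThan_Suc_shift) (simp add: add.commute)
  also have "(\<Sum>k<length w. real (w ! k ! i) * 2 powr (- real (k + 2))) = corner w i / 2"
    unfolding corner_def sum_divide_distrib
  proof (rule sum.cong[OF refl])
    fix k assume "k \<in> {..<length w}"
    have "(2::real) powr (- real (k + 1)) = 2 powr (- real (k + 2)) * 2 powr 1"
      by (subst powr_add[symmetric]) simp
    then have "2 powr (- real (k + 2)) = 2 powr (- real (k + 1)) / (2::real)"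
      by simp
    then show "real (w ! k ! i) * 2 powr (- real (k + 2)) = real (w ! k ! i) * 2 powr (- real (k + 1)) / 2"
      by simp
  qed
  finally show ?thesis by (simp add: powr_minus)
qed

lemma corner_cnt: "corner w i = real (cnt w i) / 2 ^ length w"
proof (induction w)
  case Nil then show ?case by (simp add: corner_def)
next
  case (Cons a w)
  show ?case unfolding corner_Cons Cons by (simp add: field_simps)
qed

lemma letter_le1: "a \<in> letters d \<Longrightarrow> i < d \<Longrightarrow> a ! i \<le> 1"
  unfolding letters_def using nth_mem by fastforce

lemma cnt_less: "set w \<subseteq> letters d \<Longrightarrow> i < d \<Longrightarrow> cnt w i < 2 ^ length w"
proof (induction w)
  case Nil then show ?case by simp
next
  case (Cons a w)
  then have "a ! i \<le> 1" "cnt w i < 2 ^ length w" using letter_le1 by auto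
  then show ?case by (cases "a ! i") auto
qed

lemma cnt_inj: "set w \<subseteq> letters d \<Longrightarrow> set v \<subseteq> letters d \<Longrightarrow> length w = length v
   \<Longrightarrow> (\<forall>i<d. cnt w i = cnt v i) \<Longrightarrow> w = v"
proof (induction w arbitrary: v)
  case Nil then show ?case by simp
next
  case (Cons a w)
  obtain b v' where v: "v = b # v'" using Cons.prems(3) by (cases v) auto
  have lw: "length v' = length w" using Cons.prems(3) v by simp
  have ha: "a \<in> letters d" "set w \<subseteq> letters d" and hb: "b \<in> letters d" "set v' \<subseteq> letters d"
    using Cons.prems(1,2) v by auto
  have eq: "\<And>i. i < d \<Longrightarrow> a ! i = b ! i \<and> cnt w i = cnt v' i"
  proof -
    fix i assume i: "i < d"
    have c1: "cnt w i < 2 ^ length w" using cnt_less[OF ha(2) i] .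
    have c2: "cnt v' i < 2 ^ length w" using cnt_less[OF hb(2) i] lw by simp
    have e: "a ! i * 2 ^ length w + cnt w i = b ! i * 2 ^ length w + cnt v' i"
      using Cons.prems(4) i v lw by auto
    have "a ! i = (a ! i * 2 ^ length w + cnt w i) div 2 ^ length w" using c1 by simp
    also have "\<dots> = b ! i" unfolding e using c2 by simp
    finally have "a ! i = b ! i" .
    with e show "a ! i = b ! i \<and> cnt w i = cnt v' i" by simp
  qed
  have "a = b" using ha hb eq unfolding letters_def by (auto intro: nth_equalityI)
  moreover have "w = v'" using Cons.IH[OF ha(2) hb(2) lw[symmetric]] eq by auto
  ultimately show ?case using v by simp
qed

lemma cube_sub:
  assumes W: "W \<in> Sigma_len d m" and w: "w \<in> Sigma_len d j" and mj: "m \<le> j"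
    and sub: "cube d w \<subseteq> cube d W" and i: "i < d"
  shows "cnt w i \<in> {cnt W i * 2 ^ (j - m) ..< (cnt W i + 1) * 2 ^ (j - m)}"
proof -
  have lW: "length W = m" and lw: "length w = j" using W w unfolding Sigma_len_def by auto
  define x where "x = (\<lambda>k. if k < d then corner w k else 0)"
  define y where "y = (\<lambda>k. if k < d then corner w k + 2 powr (- real (length w)) else 0)"
  have "x \<in> cube d w" "y \<in> cube d w" unfolding x_def y_def cube_def by auto
  then have "x \<in> cube d W" "y \<in> cube d W" using sub by auto
  then have h1: "corner W i \<le> corner w i"
     and h2: "corner w i + 2 powr (- real j) \<le> corner W i + 2 powr (- real m)"
    using i lW lw unfolding cube_def x_def y_def by auto
  have pj: "(2::real) ^ j = 2 ^ (j - m) * 2 ^ m" using mj by (simp add: power_add[symmetric])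
  have "real (cnt W i) / 2 ^ m \<le> real (cnt w i) / 2 ^ j"
    using h1 unfolding corner_cnt lW lw .
  then have "real (cnt W i) * 2 ^ (j - m) \<le> real (cnt w i)"
    unfolding pj by (simp add: field_simps)
  then have "real (cnt W i * 2 ^ (j - m)) \<le> real (cnt w i)" by simp
  then have g1: "cnt W i * 2 ^ (j - m) \<le> cnt w i" by (simp only: of_nat_le_iff)
  have "real (cnt w i) / 2 ^ j + 1 / 2 ^ j \<le> real (cnt W i) / 2 ^ m + 1 / 2 ^ m"
    using h2 unfolding corner_cnt lW lw by (simp add: powr_minus powr_realpow divide_inverse)
  then have h3: "(real (cnt w i) / 2 ^ j + 1 / 2 ^ j) * 2 ^ j \<le> (real (cnt W i) / 2 ^ m + 1 / 2 ^ m) * 2 ^ j"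
    by (rule mult_right_mono) simp
  have "real (cnt w i) + 1 = (real (cnt w i) / 2 ^ j + 1 / 2 ^ j) * 2 ^ j" by (simp add: field_simps)
  also have "\<dots> \<le> (real (cnt W i) / 2 ^ m + 1 / 2 ^ m) * 2 ^ j" by (rule h3)
  also have "\<dots> = (real (cnt W i) + 1) * 2 ^ (j - m)" unfolding pj by (simp add: field_simps)
  finally have "real (cnt w i) + 1 \<le> (real (cnt W i) + 1) * 2 ^ (j - m)" .
  then have "real (cnt w i + 1) \<le> real ((cnt W i + 1) * 2 ^ (j - m))" by (simp add: algebra_simps)
  then have "cnt w i + 1 \<le> (cnt W i + 1) * 2 ^ (j - m)" by (simp only: of_nat_le_iff)
  with g1 show ?thesis by simp
qed

definition AW :: "nat \<Rightarrow> nat \<Rightarrow> nat list list \<Rightarrow> nat list list set" where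
  "AW d j W = {w \<in> Sigma_len d j. cube d w \<subseteq> cube d W}"

lemma card_AW:
  assumes W: "W \<in> Sigma_len d m" and mj: "m \<le> j"
  shows "card (AW d j W) \<le> 2 ^ (d * (j - m))"
proof -
  let ?f = "\<lambda>w. restrict (cnt w) {..<d}"
  let ?P = "PiE {..<d} (\<lambda>i. {cnt W i * 2 ^ (j - m) ..< (cnt W i + 1) * 2 ^ (j - m)})"
  have inj: "inj_on ?f (AW d j W)"
  proof (rule inj_onI)
    fix w v assume "w \<in> AW d j W" "v \<in> AW d j W" "?f w = ?f v"
    then have "\<forall>i<d. cnt w i = cnt v i"
      by (auto simp: fun_eq_iff split: if_splits)
    then show "w = v" using \<open>w \<in> AW d j W\<close> \<open>v \<in> AW d j W\<close>
      by (intro cnt_inj[of w d v]) (auto simp: AW_def Sigma_len_def)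
  qed
  have im: "?f ` AW d j W \<subseteq> ?P"
  proof
    fix x assume "x \<in> ?f ` AW d j W"
    then obtain w where w: "w \<in> AW d j W" and x: "x = ?f w" by auto
    show "x \<in> ?P" unfolding x PiE_iff
      using cube_sub[OF W _ mj] w by (auto simp: AW_def)
  qed
  have "card (AW d j W) \<le> card ?P"
    by (rule card_inj_on_le[OF inj im]) (simp add: finite_PiE)
  also have "card ?P = (2 ^ (j - m)) ^ d"
    by (simp add: card_PiE algebra_simps)
  also have "((2::nat) ^ (j - m)) ^ d = 2 ^ (d * (j - m))" by (simp add: power_mult[symmetric] mult.commute)
  finally show ?thesis .
qed



lemma Sigma_len_star: "1 \<le> j \<Longrightarrow> Sigma_len d j \<subseteq> Sigma_star d"
  unfolding Sigma_star_def by auto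

lemma AW_sub: "AW d j W \<subseteq> Sigma_len d j" unfolding AW_def by auto

lemma finite_AW: "finite (AW d j W)" using finite_subset[OF AW_sub finite_Sigma] .

lemma S_set_in_AW: "S_set_in d p \<omega> j W = {w \<in> AW d j W. p w \<omega>}"
  unfolding S_set_in_def S_set_def AW_def by auto

lemma exponent_bound:
  fixes \<eta> :: real and d j :: nat
  assumes "0 < \<eta>" "\<eta> < 1"
  defines "m \<equiv> nat \<lfloor>\<eta> * real j\<rfloor>"
  shows "m \<le> j" and "(2::real) ^ (d * (j - m)) * 2 powr (- (real d * (1 - \<eta>) * real j)) \<le> 2 ^ d"
proof -
  have e0: "0 \<le> \<eta> * real j" using assms by simp
  have fm: "real m = of_int \<lfloor>\<eta> * real j\<rfloor>"
    unfolding m_def using e0 by simp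
  have fl: "real m \<le> \<eta> * real j" "\<eta> * real j < real m + 1"
    unfolding fm by linarith+
  have "\<eta> * real j \<le> real j" using assms by (simp add: mult_left_le_one_le)
  then show mj: "m \<le> j" using fl by linarith
  have "(2::real) ^ (d * (j - m)) * 2 powr (- (real d * (1 - \<eta>) * real j))
      = 2 powr (real d * (real j - real m) - real d * (1 - \<eta>) * real j)"
  proof -
    have a: "(2::real) ^ (d * (j - m)) = 2 powr real (d * (j - m))"
      by (rule powr_realpow[symmetric]) simp
    have b: "real (d * (j - m)) = real d * (real j - real m)"
      using mj by (simp add: of_nat_diff)
    show ?thesis unfolding a b by (simp add: powr_add[symmetric])
  qed
  also have "\<dots> \<le> 2 powr (real d)"
  proof (rule powr_mono)
    have "real d * (real j - real m) - real d * (1 - \<eta>) * real j = real d * (\<eta> * real j - real m)"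
      by (simp add: algebra_simps)
    also have "\<dots> \<le> real d * 1" using fl by (intro mult_left_mono) auto
    finally show "real d * (real j - real m) - real d * (1 - \<eta>) * real j \<le> real d" by simp
  qed simp
  also have "\<dots> = 2 ^ d" by (simp add: powr_realpow)
  finally show "(2::real) ^ (d * (j - m)) * 2 powr (- (real d * (1 - \<eta>) * real j)) \<le> 2 ^ d" .
qed

lemma summable_bound: "summable (\<lambda>j. (2::real) ^ d * (4 ^ d) ^ j / fact j)"
proof -
  have "summable (\<lambda>j. inverse (fact j) * ((4::real) ^ d) ^ j)" by (rule summable_exp)
  then have "summable (\<lambda>j. 2 ^ d * (inverse (fact j) * ((4::real) ^ d) ^ j))" by (rule summable_mult)
  then show ?thesis by (simp add: divide_inverse mult_ac)
qed



lemma term_bound: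
  fixes X q C :: real
  assumes "real N \<le> X" "X * q \<le> C" "0 \<le> q"
  shows "real (N choose k) * q ^ k \<le> C ^ k / fact k"
proof -
  have "(N choose k) * fact k \<le> N ^ k" by (rule binomial_fact_pow)
  then have "real (N choose k) * fact k \<le> real N ^ k"
    by (metis of_nat_fact of_nat_le_iff of_nat_mult of_nat_power)
  then have h: "real (N choose k) \<le> real N ^ k / fact k"
    by (simp add: pos_le_divide_eq)
  have "real (N choose k) * q ^ k \<le> real N ^ k / fact k * q ^ k"
    using mult_right_mono[OF h, of "q ^ k"] assms(3) by simp
  also have "\<dots> = (real N * q) ^ k / fact k" by (simp add: power_mult_distrib)
  also have "\<dots> \<le> C ^ k / fact k"
  proof (intro divide_right_mono power_mono)
    show "real N * q \<le> C" using assms by (meson mult_right_mono order_trans)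
  qed (use assms in auto)
  finally show ?thesis .
qed

lemma final_arith:
  assumes "m \<le> j"
  shows "real (2 ^ (d * m)) * ((2 ^ d) ^ Suc j / fact (Suc j)) \<le> (2::real) ^ d * (4 ^ d) ^ j / fact j"
proof -
  have "real (2 ^ (d * m)) \<le> (2::real) ^ (d * j)"
    using assms by (simp add: power_increasing)
  then have "real (2 ^ (d * m)) * ((2 ^ d) ^ Suc j / fact (Suc j)) \<le> 2 ^ (d * j) * ((2 ^ d) ^ Suc j / fact (Suc j))"
    by (intro mult_right_mono) auto
  also have "\<dots> = 2 ^ d * (4 ^ d) ^ j / fact (Suc j)"
  proof -
    have "(2::real) ^ (d * j) * (2 ^ d) ^ Suc j = 2 ^ (d * j + d * Suc j)"
      by (simp add: power_add power_mult)
    also have "d * j + d * Suc j = d + (2 * d) * j" by (simp add: algebra_simps)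
    also have "(2::real) ^ (d + (2 * d) * j) = 2 ^ d * (4 ^ d) ^ j" by (simp add: power_add power_mult)
    finally have "(2::real) ^ (d * j) * (2 ^ d) ^ Suc j = 2 ^ d * (4 ^ d) ^ j" .
    then show ?thesis by simp
  qed
  also have "\<dots> \<le> 2 ^ d * (4 ^ d) ^ j / fact j"
    by (intro divide_left_mono) (auto simp: fact_mono)
  finally show ?thesis .
qed



theorem lemma3:
  fixes M :: "'a measure" and d :: nat and \<eta> :: real
    and p :: "nat list list \<Rightarrow> 'a \<Rightarrow> bool"
  assumes "prob_space M"
    and "d \<ge> 1"
    and "0 < \<eta>" and "\<eta> < 1"
    and "prob_space.indep_vars M (\<lambda>_. count_space UNIV) p (Sigma_star d)"
    and "\<And>w. w \<in> Sigma_star d \<Longrightarrow>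
           measure M {\<omega> \<in> space M. p w \<omega>} = 2 powr (- (real d * (1 - \<eta>) * real (length w)))"
  shows "AE \<omega> in M. \<exists>J. \<forall>j\<ge>J. \<forall>W \<in> Sigma_len d (nat \<lfloor>\<eta> * real j\<rfloor>).
           card (S_set_in d p \<omega> j W) \<le> j"
proof -
  interpret P: prob_space M by fact
  have meas: "\<And>w. w \<in> Sigma_star d \<Longrightarrow> p w \<in> measurable M (count_space UNIV)"
   and indepS: "P.indep_sets (\<lambda>i. {p i -` A \<inter> space M | A. A \<in> sets (count_space UNIV)}) (Sigma_star d)"
    using assms(5) unfolding P.indep_vars_def2 by auto
  define E where "E w = {\<omega> \<in> space M. p w \<omega>}" for w
  have E_eq: "E w = p w -` {True} \<inter> space M" for w by (auto simp: E_def)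
  have Ev: "E w \<in> sets M" if "w \<in> Sigma_star d" for w
    using measurable_sets[OF meas[OF that], of "{True}"] E_eq by simp
  define q where "q j = (2::real) powr (- (real d * (1 - \<eta>) * real j))" for j :: nat
  have q0: "0 \<le> q j" for j unfolding q_def by simp
  have prodB: "P.prob (\<Inter>w\<in>B. E w) = q j ^ card B"
    if j: "1 \<le> j" and B: "B \<subseteq> Sigma_len d j" "B \<noteq> {}" "finite B" for B j
  proof -
    have sub: "B \<subseteq> Sigma_star d" by (rule subset_trans[OF B(1) Sigma_len_star[OF j]])
    have "P.prob (\<Inter>w\<in>B. E w) = (\<Prod>w\<in>B. P.prob (E w))"
    proof (rule P.indep_setsD[OF indepS sub B(2,3)])
      show "\<forall>w\<in>B. E w \<in> {p w -` A \<inter> space M | A. A \<in> sets (count_space UNIV)}"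
      proof
        fix w assume "w \<in> B"
        show "E w \<in> {p w -` A \<inter> space M | A. A \<in> sets (count_space UNIV)}"
          unfolding E_eq by (rule CollectI, rule exI[of _ "{True}"]) simp
      qed
    qed
    also have "\<dots> = (\<Prod>w\<in>B. q j)"
    proof (rule prod.cong[OF refl])
      fix w assume w: "w \<in> B"
      then have "length w = j" using B(1) unfolding Sigma_len_def by auto
      then show "P.prob (E w) = q j" using assms(6)[of w] sub w unfolding E_def q_def by auto
    qed
    also have "\<dots> = q j ^ card B" by simp
    finally show ?thesis .
  qed
  define m where "m j = nat \<lfloor>\<eta> * real j\<rfloor>" for j :: nat
  define Bs where "Bs j W = {B. B \<subseteq> AW d j W \<and> card B = Suc j}" for j W
  define U where "U j = (if j = 0 then {} else \<Union>W\<in>Sigma_len d (m j). \<Union>B\<in>Bs j W. \<Inter>w\<in>B. E w)" for j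
  have finBs: "finite (Bs j W)" for j W
    by (rule finite_subset[of _ "Pow (AW d j W)"]) (auto simp: Bs_def finite_AW)
  have Bprops: "B \<noteq> {} \<and> finite B \<and> B \<subseteq> Sigma_len d j" if "B \<in> Bs j W" for B j W
    using that AW_sub[of d j W] unfolding Bs_def by (auto intro: card_ge_0_finite)
  have InterS: "(\<Inter>w\<in>B. E w) \<in> sets M" if "1 \<le> j" "B \<in> Bs j W" for B j W
    using Bprops[OF that(2)] Sigma_len_star[OF that(1)] Ev
    by (intro sets.finite_INT) auto
  have Usets: "U j \<in> sets M" for j
  proof (cases "j = 0")
    case True then show ?thesis by (simp add: U_def)
  next
    case False
    then have j1: "1 \<le> j" by simp
    show ?thesis unfolding U_def using False InterS[OF j1] finBs finite_Sigma
      by (auto intro!: sets.finite_UN)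
  qed
  have Ubound: "P.prob (U j) \<le> 2 ^ d * (4 ^ d) ^ j / fact j" for j
  proof (cases "j = 0")
    case True then show ?thesis by (simp add: U_def)
  next
    case False
    then have j1: "1 \<le> j" by simp
    have mj: "m j \<le> j" and exb: "(2::real) ^ (d * (j - m j)) * q j \<le> 2 ^ d"
      using exponent_bound(1)[OF assms(3,4), of j] exponent_bound(2)[OF assms(3,4), of d j] unfolding m_def q_def by auto
    have "P.prob (U j) \<le> (\<Sum>W\<in>Sigma_len d (m j). P.prob (\<Union>B\<in>Bs j W. \<Inter>w\<in>B. E w))"
      unfolding U_def using False
      by (simp, intro P.finite_measure_subadditive_finite finite_Sigma)
        (use InterS[OF j1] finBs in \<open>auto intro!: sets.finite_UN\<close>)
    also have "\<dots> \<le> (\<Sum>W\<in>Sigma_len d (m j). (2 ^ d) ^ Suc j / fact (Suc j))"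
    proof (rule sum_mono)
      fix W assume W: "W \<in> Sigma_len d (m j)"
      have "P.prob (\<Union>B\<in>Bs j W. \<Inter>w\<in>B. E w) \<le> (\<Sum>B\<in>Bs j W. P.prob (\<Inter>w\<in>B. E w))"
      proof (rule P.finite_measure_subadditive_finite[OF finBs], rule image_subsetI)
        fix B assume "B \<in> Bs j W"
        then show "(\<Inter>w\<in>B. E w) \<in> P.events" by (rule InterS[OF j1])
      qed
      also have "\<dots> = (\<Sum>B\<in>Bs j W. q j ^ Suc j)"
      proof (rule sum.cong[OF refl])
        fix B assume B: "B \<in> Bs j W"
        then have cB: "card B = Suc j" by (simp add: Bs_def)
        have bp: "B \<noteq> {}" "finite B" "B \<subseteq> Sigma_len d j" using Bprops[OF B] by auto
        show "P.prob (\<Inter>w\<in>B. E w) = q j ^ Suc j"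
          using prodB[OF j1 bp(3) bp(1) bp(2)] cB by simp
      qed
      also have "\<dots> = real (card (AW d j W) choose Suc j) * q j ^ Suc j"
        by (simp add: Bs_def n_subsets finite_AW)
      also have "\<dots> \<le> (2 ^ d) ^ Suc j / fact (Suc j)"
      proof (rule term_bound[OF _ exb q0])
        have "card (AW d j W) \<le> 2 ^ (d * (j - m j))" by (rule card_AW[OF W mj])
        then show "real (card (AW d j W)) \<le> 2 ^ (d * (j - m j))"
          by (metis of_nat_le_iff of_nat_numeral of_nat_power)
      qed
      finally show "P.prob (\<Union>B\<in>Bs j W. \<Inter>w\<in>B. E w) \<le> (2 ^ d) ^ Suc j / fact (Suc j)" .
    qed
    also have "\<dots> = real (2 ^ (d * m j)) * ((2 ^ d) ^ Suc j / fact (Suc j))"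
      by (simp add: card_Sigma)
    also have "\<dots> \<le> 2 ^ d * (4 ^ d) ^ j / fact j" by (rule final_arith[OF mj])
    finally show ?thesis .
  qed
  have "AE x in M. eventually (\<lambda>n. x \<in> space M - U n) sequentially"
  proof (rule borel_cantelli_AE1)
    show "U n \<in> sets M" for n by (rule Usets)
    show "emeasure M (U n) < \<infinity>" for n by (simp add: less_top[symmetric])
    show "summable (\<lambda>n. measure M (U n))"
      by (rule summable_comparison_test'[OF summable_bound[of d], of 0]) (use Ubound in auto)
  qed
  then show ?thesis
  proof (rule AE_mp, intro AE_I2 impI)
    fix x assume "eventually (\<lambda>n. x \<in> space M - U n) sequentially"
    then obtain N where N: "\<And>n. n \<ge> N \<Longrightarrow> x \<in> space M - U n"
      unfolding eventually_sequentially by blast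
    show "\<exists>J. \<forall>j\<ge>J. \<forall>W \<in> Sigma_len d (nat \<lfloor>\<eta> * real j\<rfloor>). card (S_set_in d p x j W) \<le> j"
    proof (intro exI allI impI ballI)
      fix j W assume j: "Suc N \<le> j" and W: "W \<in> Sigma_len d (nat \<lfloor>\<eta> * real j\<rfloor>)"
      show "card (S_set_in d p x j W) \<le> j"
      proof (rule ccontr)
        assume "\<not> card (S_set_in d p x j W) \<le> j"
        then have "Suc j \<le> card {w \<in> AW d j W. p w x}" unfolding S_set_in_AW by simp
        then obtain B where B: "B \<subseteq> {w \<in> AW d j W. p w x}" "card B = Suc j" "finite B"
          by (rule obtain_subset_with_card_n)
        have xs: "x \<in> space M" "x \<notin> U j" using N[of j] j by auto
        have "B \<in> Bs j W" using B unfolding Bs_def by auto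
        moreover have "x \<in> (\<Inter>w\<in>B. E w)" using B xs unfolding E_def by auto
        ultimately have "x \<in> U j" using W j unfolding U_def m_def by auto
        with xs show False by simp
      qed
    qed
  qed
qed

end
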